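(* Let $U:\mathbb{R}^d\to\mathbb{R}$ be twice continuously differentiable with $\nabla U(0)=0$ and $\sup_x\|\mathrm{D}^2U(x)\|\le\mathtt{L}$, and assume there exist $\mathtt{m}>0$, $\mathtt{K}\ge0$ with $\mathrm{D}^2U(x)[y,y]\ge\mathtt{m}$ whenever $\|x\|\ge\mathtt{K}$, $\|y\|=1$. Let $\tilde{\mathtt{K}}=2\mathtt{K}(1+\mathtt{L}/\mathtt{m})$ and $\tilde{\mathtt{C}}=\mathtt{L}\tilde{\mathtt{K}}^2$. Then for all $x\in\mathbb{R}^d$, $$\langle\nabla U(x),x\rangle\ge(\mathtt{m}/2)\|x\|^2-\tilde{\mathtt{C}}\mathbb{1}_{B(0,\tilde{\mathtt{K}})}(x).$$
   Context: $B(0,K)=\{x\in\mathbb{R}^d:\|x\|<K\}$. *)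

theory Defs
  imports "HOL-Analysis.Analysis"
begin

end

theory Submission
  imports Defs
begin

lemma phi_deriv:
  fixes gradU :: "'a::euclidean_space \<Rightarrow> 'a" and hessU :: "'a \<Rightarrow> 'a \<Rightarrow>\<^sub>L 'a"
  assumes hess: "\<And>x. (gradU has_derivative blinfun_apply (hessU x)) (at x)"
  shows "((\<lambda>t. gradU (t *\<^sub>R x) \<bullet> x) has_real_derivative (blinfun_apply (hessU (t *\<^sub>R x)) x \<bullet> x)) (at t within S)"
proof -
  have d1: "((\<lambda>t. t *\<^sub>R x) has_derivative (\<lambda>h. h *\<^sub>R x)) (at t within S)"
    by (auto intro!: derivative_eq_intros)
  have d2: "((\<lambda>t. gradU (t *\<^sub>R x)) has_derivative (\<lambda>h. blinfun_apply (hessU (t *\<^sub>R x)) (h *\<^sub>R x))) (at t within S)"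
    using has_derivative_compose[OF d1 has_derivative_at_withinI[OF hess]] by (simp add: o_def)
  have d3: "((\<lambda>t. gradU (t *\<^sub>R x) \<bullet> x) has_derivative (\<lambda>h. blinfun_apply (hessU (t *\<^sub>R x)) (h *\<^sub>R x) \<bullet> x)) (at t within S)"
    using has_derivative_inner_left[OF d2] .
  have eq: "(\<lambda>h. blinfun_apply (hessU (t *\<^sub>R x)) (h *\<^sub>R x) \<bullet> x) = (*) (blinfun_apply (hessU (t *\<^sub>R x)) x \<bullet> x)"
    by (rule ext) (simp add: blinfun.scaleR_right)
  show ?thesis unfolding has_field_derivative_def
    using d3 unfolding eq .
qed

lemma mvt_lower:
  fixes f f' :: "real \<Rightarrow> real"
  assumes "a \<le> b" "\<And>t. a \<le> t \<Longrightarrow> t \<le> b \<Longrightarrow> (f has_real_derivative f' t) (at t)"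
    and "\<And>t. a < t \<Longrightarrow> t < b \<Longrightarrow> f' t \<ge> c"
  shows "f b - f a \<ge> (b - a) * c"
proof (cases "a = b")
  case True then show ?thesis by simp
next
  case False
  then have "a < b" using assms(1) by simp
  from MVT2[OF this, of f f'] assms(2) obtain z where z: "a < z" "z < b" "f b - f a = (b - a) * f' z"
    by auto
  have "f' z \<ge> c" using assms(3) z by auto
  then show ?thesis using z \<open>a < b\<close> by (simp add: mult_left_mono)
qed

lemma alg_in:
  fixes m L K r :: real
  assumes "m > 0" "m \<le> L" "K \<ge> 0"
  shows "m * r\<^sup>2 - (L + m) * K * r \<ge> (m / 2) * r\<^sup>2 - L * (2 * K * (1 + L / m))\<^sup>2"
proof -
  define a where "a = (L + m) * K"
  have Kt: "2 * K * (1 + L / m) = 2 * a / m" using assms by (simp add: a_def field_simps)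
  have "L * (2 * a / m)\<^sup>2 = 4 * L * a\<^sup>2 / m\<^sup>2" by (simp add: power_divide)
  also have "\<dots> \<ge> a\<^sup>2 / (2 * m)"
  proof -
    have "a\<^sup>2 * m \<le> a\<^sup>2 * (8 * L)" using assms by (intro mult_left_mono) auto
    then show ?thesis using assms by (simp add: field_simps power2_eq_square)
  qed
  finally have c: "L * (2 * a / m)\<^sup>2 \<ge> a\<^sup>2 / (2 * m)" .
  have sq: "(m / 2) * r\<^sup>2 - a * r + a\<^sup>2 / (2 * m) = (m * r - a)\<^sup>2 / (2 * m)"
    using assms by (simp add: field_simps power2_eq_square)
  have "(m * r - a)\<^sup>2 / (2 * m) \<ge> 0" using assms by simp
  then have "m * r\<^sup>2 - a * r \<ge> (m / 2) * r\<^sup>2 - L * (2 * a / m)\<^sup>2" using c sq by linarith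
  then show ?thesis unfolding Kt by (simp add: a_def)
qed

lemma alg_out:
  fixes m L K r :: real
  assumes "m > 0" "m \<le> L" "K \<ge> 0" "r \<ge> 2 * K * (1 + L / m)"
  shows "m * r\<^sup>2 - (L + m) * K * r \<ge> (m / 2) * r\<^sup>2"
proof -
  have "2 * K * (1 + L / m) = 2 * ((L + m) * K) / m" using assms by (simp add: field_simps)
  then have "m * r / 2 \<ge> (L + m) * K" using assms by (simp add: field_simps)
  moreover have "r \<ge> 0"
  proof -
    have "L / m \<ge> 0" using assms by simp
    then show ?thesis using assms by (smt (verit) mult_nonneg_nonneg)
  qed
  ultimately have "r * ((L + m) * K) \<le> r * (m * r / 2)" by (metis mult_left_mono)
  then show ?thesis by (simp add: power2_eq_square algebra_simps)
qed

theorem lemma10: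
  fixes U :: "'a::euclidean_space \<Rightarrow> real"
    and gradU :: "'a \<Rightarrow> 'a"
    and hessU :: "'a \<Rightarrow> 'a \<Rightarrow>\<^sub>L 'a"
    and L m K :: real
  assumes grad: "\<And>x. (U has_derivative (\<lambda>h. gradU x \<bullet> h)) (at x)"
    and hess: "\<And>x. (gradU has_derivative blinfun_apply (hessU x)) (at x)"
    and hess_cont: "continuous_on UNIV hessU"
    and grad0: "gradU 0 = 0"
    and Lbound: "\<And>x. norm (hessU x) \<le> L"
    and m_pos: "m > 0"
    and K_nonneg: "K \<ge> 0"
    and convex_out: "\<And>x y. norm x \<ge> K \<Longrightarrow> norm y = 1 \<Longrightarrow> blinfun_apply (hessU x) y \<bullet> y \<ge> m"
  shows "\<forall>x. gradU x \<bullet> x \<ge> (m / 2) * (norm x)\<^sup>2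
            - (L * (2 * K * (1 + L / m))\<^sup>2) * indicator (ball 0 (2 * K * (1 + L / m))) x"
proof
  fix x :: 'a
  obtain e :: 'a where e: "norm e = 1" using norm_Basis nonempty_Basis by blast
  have "m \<le> blinfun_apply (hessU (K *\<^sub>R e)) e \<bullet> e"
    using convex_out[of "K *\<^sub>R e" e] e K_nonneg by simp
  also have "\<dots> \<le> norm (blinfun_apply (hessU (K *\<^sub>R e)) e) * norm e"
    using norm_cauchy_schwarz by blast
  also have "\<dots> \<le> norm (hessU (K *\<^sub>R e)) * norm e * norm e"
    using norm_blinfun[of "hessU (K *\<^sub>R e)" e] e by simp
  also have "\<dots> \<le> L" using e Lbound by simp
  finally have Lm: "m \<le> L" .
  define r where "r = norm x"
  have Hlow: "blinfun_apply (hessU z) x \<bullet> x \<ge> - L * r\<^sup>2" for z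
  proof -
    have "\<bar>blinfun_apply (hessU z) x \<bullet> x\<bar> \<le> norm (blinfun_apply (hessU z) x) * norm x"
      by (rule Cauchy_Schwarz_ineq2)
    also have "\<dots> \<le> norm (hessU z) * norm x * norm x"
      using norm_blinfun[of "hessU z" x] by (simp add: mult_right_mono)
    also have "\<dots> \<le> L * r\<^sup>2" unfolding r_def power2_eq_square
      using Lbound[of z] by (simp add: mult_right_mono mult.assoc)
    finally show ?thesis by linarith
  qed
  have main: "gradU x \<bullet> x \<ge> m * r\<^sup>2 - (L + m) * K * r"
  proof (cases "r = 0")
    case True then show ?thesis using grad0 r_def by simp
  next
    case False
    then have rpos: "r > 0" using r_def by simp
    define s where "s = min 1 (K / r)"
    have s01: "0 \<le> s" "s \<le> 1" using K_nonneg rpos by (auto simp: s_def)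
    have "s \<le> K / r" by (simp add: s_def)
    then have srK: "r * s \<le> K" using rpos by (simp add: pos_le_divide_eq mult.commute)
    define \<phi> where "\<phi> t = gradU (t *\<^sub>R x) \<bullet> x" for t
    have dphi: "(\<phi> has_real_derivative (blinfun_apply (hessU (t *\<^sub>R x)) x \<bullet> x)) (at t)" for t
      unfolding \<phi>_def by (rule phi_deriv[OF hess])
    have A: "\<phi> s - \<phi> 0 \<ge> (s - 0) * (- L * r\<^sup>2)"
      by (rule mvt_lower[OF s01(1) dphi Hlow[of "_ *\<^sub>R x"]])
    have Hhigh: "blinfun_apply (hessU (t *\<^sub>R x)) x \<bullet> x \<ge> m * r\<^sup>2" if "s < t" "t < 1" for t
    proof -
      have "s = K / r" using that by (auto simp: s_def)
      then have "K \<le> norm (t *\<^sub>R x)" using that rpos s01 by (auto simp: r_def field_simps)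
      then have "m \<le> blinfun_apply (hessU (t *\<^sub>R x)) ((1/r) *\<^sub>R x) \<bullet> ((1/r) *\<^sub>R x)"
        using convex_out[of "t *\<^sub>R x" "(1/r) *\<^sub>R x"] rpos r_def by simp
      also have "\<dots> = (blinfun_apply (hessU (t *\<^sub>R x)) x \<bullet> x) / r\<^sup>2"
        by (simp add: blinfun.scaleR_right power2_eq_square)
      finally show ?thesis using rpos by (simp add: field_simps)
    qed
    have B: "\<phi> 1 - \<phi> s \<ge> (1 - s) * (m * r\<^sup>2)"
      by (rule mvt_lower[OF s01(2) dphi Hhigh])
    have "\<phi> 0 = 0" using grad0 by (simp add: \<phi>_def)
    then have "\<phi> 1 \<ge> m * r\<^sup>2 - (L + m) * r\<^sup>2 * s" using A B by (simp add: algebra_simps)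
    moreover have "(L + m) * r\<^sup>2 * s \<le> (L + m) * K * r"
    proof -
      have "(L + m) * r * (r * s) \<le> (L + m) * r * K"
        using srK rpos m_pos Lm by (intro mult_left_mono) auto
      then show ?thesis by (simp add: power2_eq_square algebra_simps)
    qed
    ultimately show ?thesis by (simp add: \<phi>_def)
  qed
  show "gradU x \<bullet> x \<ge> (m / 2) * (norm x)\<^sup>2
            - (L * (2 * K * (1 + L / m))\<^sup>2) * indicator (ball 0 (2 * K * (1 + L / m))) x"
  proof (cases "x \<in> ball 0 (2 * K * (1 + L / m))")
    case True
    then show ?thesis using alg_in[OF m_pos Lm K_nonneg, of r] main by (simp add: r_def)
  next
    case False
    then have rK: "r \<ge> 2 * K * (1 + L / m)" by (simp add: r_def)
    then show ?thesis using alg_out[OF m_pos Lm K_nonneg rK] main False by (simp add: r_def)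
  qed
qed

end
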